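(* Let $q,m\in\mathbb{Z}$ and let $g(x,y)=a_0y^m\prod_{i=1}^n(xy^q-a_i)$ be a polynomial with $a_0\in\mathbb{C}\setminus\{0\}$ and $a_1,\dots,a_n\in\mathbb{C}$; its Newton polytope lies on the line $\ell=\{(t,qt+m):t\in\mathbb{R}\}$. Let $h(x,y)\in\mathbb{C}[x,y]$ be a polynomial such that every $(i,j)\in\mathrm{supp}(h)$ satisfies $j>qi+m$. Then there exists $\epsilon_0>0$ such that for every $0<\epsilon<\epsilon_0$ there exists $\delta>0$ such that for every $a\in\mathbb{C}$ with $0<|a|<\delta$ the following holds: if $\xi$ is a non-zero root of $g(x,a)$ of multiplicity $p$, then $g(x,a)+h(x,a)$ has exactly $p$ roots $\xi'$ (counted with multiplicity) satisfying $|\xi'-\xi|\le\epsilon|\xi|$.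
   Context: $\mathrm{supp}(h)$ is the set of exponent pairs $(i,j)$ of monomials $x^iy^j$ with non-zero coefficient in $h$; the Newton polytope is the convex hull of the support. *)

theory Defs
  imports "HOL-Computational_Algebra.Polynomial" "HOL-Analysis.Analysis"
begin

definition g_at :: "complex \<Rightarrow> (nat \<Rightarrow> complex) \<Rightarrow> nat \<Rightarrow> int \<Rightarrow> int \<Rightarrow> complex \<Rightarrow> complex poly" where
  "g_at a0 as n q m b = smult (a0 * b powi m) (\<Prod>i\<in>{1..n}. [: - as i, b powi q :])"

text \<open>A bivariate polynomial h in C[x,y] is given by its coefficient function hc on exponent
  pairs (i,j) (coefficient of x^i y^j), with finite support.\<close>
definition supp2 :: "(nat \<times> nat \<Rightarrow> complex) \<Rightarrow> (nat \<times> nat) set" where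
  "supp2 hc = {k. hc k \<noteq> 0}"

definition h_at :: "(nat \<times> nat \<Rightarrow> complex) \<Rightarrow> complex \<Rightarrow> complex poly" where
  "h_at hc b = (\<Sum>(i,j)\<in>supp2 hc. monom (hc (i,j) * b ^ j) i)"

end

theory Submission imports Defs "HOL-Complex_Analysis.Complex_Analysis" begin

lemma zorder_poly:
  fixes P :: "complex poly"
  assumes "P \<noteq> 0"
  shows "zorder (poly P) z = int (order z P)"
proof -
  obtain q where q: "P = [:-z,1:]^order z P * q" "\<not> [:-z,1:] dvd q"
    using order_decomp[OF assms] by blast
  have qz: "poly q z \<noteq> 0" using q(2) by (simp add: poly_eq_0_iff_dvd)
  show ?thesis
  proof (rule zorder_eqI[of UNIV z "poly q"])
    fix w assume "w \<in> (UNIV::complex set)" "w \<noteq> z"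
    have "poly P w = poly ([:-z,1:]^order z P * q) w" using q(1) by simp
    also have "\<dots> = poly q w * (w - z) powi int (order z P)"
      by (simp add: poly_power power_int_of_nat)
    finally show "poly P w = poly q w * (w - z) powi int (order z P)" .
  next
    have "(\<lambda>w. poly q w) holomorphic_on UNIV" by (intro poly_holomorphic_on holomorphic_intros)
    then show "poly q holomorphic_on UNIV" by simp
  qed (auto simp: qz)
qed

lemma rouche_count:
  fixes F H :: "complex poly" and c :: complex and r :: real
  assumes r: "r > 0" and F: "F \<noteq> 0"
    and less: "\<And>z. cmod (z - c) = r \<Longrightarrow> cmod (poly H z) < cmod (poly F z)"
  shows "(\<Sum>z\<in>{z. poly (F+H) z = 0 \<and> cmod (z - c) \<le> r}. order z (F+H))
       = (\<Sum>z\<in>{z. poly F z = 0 \<and> cmod (z - c) \<le> r}. order z F)"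
proof -
  have circ: "poly (F+H) z \<noteq> 0" "poly F z \<noteq> 0" if "cmod (z - c) = r" for z
  proof -
    have "cmod (poly H z) < cmod (poly F z)" using less that .
    then show "poly (F+H) z \<noteq> 0" "poly F z \<noteq> 0"
      by (auto simp: add_eq_0_iff2)
  qed
  have "cmod ((c + of_real r) - c) = r" using r by simp
  then have FH: "F + H \<noteq> 0" using circ(1) by fastforce
  let ?\<gamma> = "circlepath c r"
  have R: "(\<Sum>p\<in>{p\<in>UNIV. poly F p + poly H p = 0}. winding_number ?\<gamma> p * zorder (\<lambda>p. poly F p + poly H p) p)
          = (\<Sum>p\<in>{p\<in>UNIV. poly F p = 0}. winding_number ?\<gamma> p * zorder (poly F) p)"
  proof (rule Rouche_theorem)
    show "finite {p \<in> UNIV. poly F p + poly H p = 0}"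
      using poly_roots_finite[OF FH] by simp
    show "finite {p \<in> UNIV. poly F p = 0}"
      using poly_roots_finite[OF F] by simp
    show "\<forall>z\<in>path_image ?\<gamma>. cmod (poly H z) < cmod (poly F z)"
      using r less by (auto simp: dist_norm norm_minus_commute)
  qed (auto intro: poly_holomorphic_on)
  have key: "winding_number ?\<gamma> p * of_int (zorder (poly P) p)
             = (if cmod (p - c) \<le> r then of_nat (order p P) else 0)"
    if P: "P \<noteq> 0" and pr: "poly P p = 0" and nc: "cmod (p - c) \<noteq> r" for P p
  proof (cases "cmod (p - c) < r")
    case True
    then show ?thesis using winding_number_circlepath[of p c r] zorder_poly[OF P]
      by simp
  next
    case False
    then have "p \<notin> cball c r" using nc by (auto simp: dist_norm norm_minus_commute)
    then have "winding_number ?\<gamma> p = 0"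
      by (intro winding_number_zero_outside[of _ "cball c r"])
         (use r in \<open>auto simp: dist_norm norm_minus_commute\<close>)
    then show ?thesis using False nc by simp
  qed
  have fin1: "finite {p. poly (F+H) p = 0}" using poly_roots_finite[OF FH] .
  have fin2: "finite {p. poly F p = 0}" using poly_roots_finite[OF F] .
  have L: "(\<Sum>p\<in>{p\<in>UNIV. poly F p + poly H p = 0}. winding_number ?\<gamma> p * zorder (\<lambda>p. poly F p + poly H p) p)
      = (\<Sum>p\<in>{p. poly (F+H) p = 0}. (if cmod (p - c) \<le> r then of_nat (order p (F+H)) else 0))"
  proof (rule sum.cong)
    fix p assume "p \<in> {p. poly (F+H) p = 0}"
    then have p: "poly (F+H) p = 0" by simp
    then have "cmod (p - c) \<noteq> r" using circ(1) by blast
    moreover have "(\<lambda>p. poly F p + poly H p) = poly (F+H)" by auto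
    ultimately show "winding_number ?\<gamma> p * zorder (\<lambda>p. poly F p + poly H p) p
       = (if cmod (p - c) \<le> r then of_nat (order p (F+H)) else 0)"
      using key[OF FH p] by simp
  qed simp
  have L2: "(\<Sum>p\<in>{p\<in>UNIV. poly F p = 0}. winding_number ?\<gamma> p * zorder (poly F) p)
      = (\<Sum>p\<in>{p. poly F p = 0}. (if cmod (p - c) \<le> r then of_nat (order p F) else 0))"
  proof (rule sum.cong)
    fix p assume "p \<in> {p. poly F p = 0}"
    then have p: "poly F p = 0" by simp
    then have "cmod (p - c) \<noteq> r" using circ(2) by blast
    then show "winding_number ?\<gamma> p * zorder (poly F) p
       = (if cmod (p - c) \<le> r then of_nat (order p F) else 0)"
      using key[OF F p] by simp
  qed simp
  have "(\<Sum>p\<in>{p. poly (F+H) p = 0}. (if cmod (p - c) \<le> r then of_nat (order p (F+H)) else 0::complex))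
      = (\<Sum>p\<in>{p. poly F p = 0}. (if cmod (p - c) \<le> r then of_nat (order p F) else 0))"
    using R L L2 by simp
  then have "of_nat (\<Sum>z\<in>{z. poly (F+H) z = 0 \<and> cmod (z - c) \<le> r}. order z (F+H))
     = (of_nat (\<Sum>z\<in>{z. poly F z = 0 \<and> cmod (z - c) \<le> r}. order z F) :: complex)"
    using fin1 fin2 by (simp add: sum.inter_filter[symmetric] Collect_conj_eq)
  then show ?thesis using of_nat_eq_iff by blast
qed

lemma poly_g: "poly (g_at a0 as n q m b) z = a0 * b powi m * (\<Prod>i\<in>{1..n}. b powi q * z - as i)"
  unfolding g_at_def by (simp add: poly_prod algebra_simps)

lemma poly_h: "poly (h_at hc b) z = (\<Sum>(i,j)\<in>supp2 hc. hc (i,j) * b^j * z^i)"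
  unfolding h_at_def by (simp add: poly_sum poly_monom case_prod_beta)

lemma term_bound:
  fixes x y T :: real and q m :: int and i j :: nat
  assumes "0 < x" "x \<le> 1" "0 \<le> y" "x powi q * y \<le> T" "int j > q * int i + m"
  shows "x^j * y^i \<le> T^i * (x powi m * x)"
proof -
  have "x^j * y^i = (x powi q * y)^i * x powi (int j - q * int i)"
  proof -
    have a: "(x powi q)^i = x powi (q * int i)" by (simp add: power_int_power')
    have b: "x powi (int j - q*int i) = x^j / x powi (q * int i)"
      using assms(1) by (simp add: power_int_diff)
    have c: "x powi (q * int i) \<noteq> 0" using assms(1) by simp
    show ?thesis unfolding power_mult_distrib a b using c assms(1) by (simp add: field_simps)
  qed
  also have "\<dots> \<le> T^i * x powi (m+1)"
  proof (rule mult_mono)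
    show "(x powi q * y)^i \<le> T^i" using assms by (intro power_mono) auto
    show "x powi (int j - q * int i) \<le> x powi (m+1)"
      using assms by (intro power_int_decreasing) auto
  next
    have "0 \<le> x powi q * y" using assms by simp
    then show "0 \<le> T^i" using assms(4) by simp
  qed (use assms in auto)
  also have "x powi (m+1) = x powi m * x" using assms(1) by (simp add: power_int_add)
  finally show ?thesis .
qed


lemma h_bound:
  assumes "\<forall>(i,j)\<in>supp2 hc. int j > q * int i + m" "0 < cmod b" "cmod b \<le> 1"
    "cmod (b powi q * z) \<le> T"
  shows "cmod (poly (h_at hc b) z) \<le> (\<Sum>(i,j)\<in>supp2 hc. cmod (hc (i,j)) * T^i) * (cmod b powi m * cmod b)"
proof -
  have "cmod (poly (h_at hc b) z) \<le> (\<Sum>ij\<in>supp2 hc. cmod (hc ij * b^snd ij * z^fst ij))"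
    unfolding poly_h case_prod_beta prod.collapse by (rule norm_sum)
  also have "\<dots> \<le> (\<Sum>ij\<in>supp2 hc. cmod (hc ij) * T^fst ij * (cmod b powi m * cmod b))"
  proof (rule sum_mono)
    fix ij assume ij: "ij \<in> supp2 hc"
    obtain i j where ijd: "ij = (i,j)" by fastforce
    have e: "cmod (hc ij * b^j * z^i) = cmod (hc ij) * (cmod b^j * cmod z^i)"
      by (simp add: norm_mult norm_power)
    have "cmod b^j * cmod z^i \<le> T^i * (cmod b powi m * cmod b)"
    proof (rule term_bound)
      show "cmod b powi q * cmod z \<le> T" using assms(4) by (simp add: norm_mult norm_power_int)
      show "q * int i + m < int j" using assms(1) ij ijd by auto
    qed (use assms in auto)
    then show "cmod (hc ij * b^snd ij * z^fst ij) \<le> cmod (hc ij) * T^fst ij * (cmod b powi m * cmod b)"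
      unfolding ijd using e ijd by (simp add: mult_left_mono mult.assoc)
  qed
  also have "\<dots> = (\<Sum>(i,j)\<in>supp2 hc. cmod (hc (i,j)) * T^i) * (cmod b powi m * cmod b)"
    by (simp add: sum_distrib_right case_prod_beta)
  finally show ?thesis .
qed

theorem lemma5p2:
  fixes q m :: int and n :: nat and a0 :: complex and as :: "nat \<Rightarrow> complex"
    and hc :: "nat \<times> nat \<Rightarrow> complex"
  assumes "a0 \<noteq> 0"
    and "finite (supp2 hc)"
    and "\<forall>(i,j)\<in>supp2 hc. int j > q * int i + m"
  shows "\<exists>\<epsilon>0>0. \<forall>\<epsilon>. 0 < \<epsilon> \<and> \<epsilon> < \<epsilon>0 \<longrightarrow>
           (\<exists>\<delta>>0. \<forall>b::complex. 0 < cmod b \<and> cmod b < \<delta> \<longrightarrow>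
              (\<forall>\<xi>. \<xi> \<noteq> 0 \<and> poly (g_at a0 as n q m b) \<xi> = 0 \<longrightarrow>
                 (\<Sum>z\<in>{z. poly (g_at a0 as n q m b + h_at hc b) z = 0 \<and> cmod (z - \<xi>) \<le> \<epsilon> * cmod \<xi>}.
                     order z (g_at a0 as n q m b + h_at hc b))
                 = order \<xi> (g_at a0 as n q m b)))"
proof -
  define I where "I = {1..n}"
  define P where "P = {(i,k). i \<in> I \<and> k \<in> I \<and> as k \<noteq> 0 \<and> as i \<noteq> as k}"
  have finP: "finite P" unfolding P_def I_def
    by (rule finite_subset[of _ "{1..n} \<times> {1..n}"]) auto
  define e0 where "e0 = Min (insert 1 ((\<lambda>(i,k). cmod (as i - as k) / (2 * cmod (as k))) ` P))"
  have e0pos: "e0 > 0" unfolding e0_def using finP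
    by (subst Min_gr_iff) (auto simp: P_def)
  have e0le1: "e0 \<le> 1" unfolding e0_def using finP by (intro Min_le) auto
  have e0P: "e0 \<le> cmod (as i - as k) / (2 * cmod (as k))" if "(i,k) \<in> P" for i k
    unfolding e0_def using finP that by (intro Min_le) force+
  define al where "al = Min (insert 1 ((\<lambda>k. cmod (as k)) ` {k\<in>I. as k \<noteq> 0}))"
  have alpos: "al > 0" unfolding al_def I_def by (subst Min_gr_iff) auto
  have alle: "al \<le> cmod (as k)" if "k \<in> I" "as k \<noteq> 0" for k
    unfolding al_def I_def using that by (intro Min_le) (auto simp: I_def)
  define M where "M = 1 + (\<Sum>i\<in>I. cmod (as i))"
  have Mge: "cmod (as k) \<le> M" if "k \<in> I" for k
  proof -
    have "cmod (as k) \<le> (\<Sum>i\<in>I. cmod (as i))"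
      using that by (intro member_le_sum) (auto simp: I_def)
    then show ?thesis unfolding M_def by simp
  qed
  show ?thesis
  proof (rule exI[of _ e0], intro conjI allI impI)
    show "e0 > 0" by (fact e0pos)
    fix \<epsilon> :: real assume "0 < \<epsilon> \<and> \<epsilon> < e0"
    then have ep: "0 < \<epsilon>" "\<epsilon> < e0" by auto
    define H where "H = (\<Sum>(i,j)\<in>supp2 hc. cmod (hc (i,j)) * (2*M)^i)"
    have M1: "M \<ge> 1" unfolding M_def by (simp add: sum_nonneg)
    have H0: "H \<ge> 0" unfolding H_def using M1
      by (intro sum_nonneg) (auto simp: case_prod_beta)
    define L where "L = \<epsilon> * al"
    have L0: "L > 0" unfolding L_def using ep alpos by simp
    define \<delta> where "\<delta> = min 1 (cmod a0 * L^n / (H+1))"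
    show "\<exists>\<delta>>0. \<forall>b::complex. 0 < cmod b \<and> cmod b < \<delta> \<longrightarrow>
              (\<forall>\<xi>. \<xi> \<noteq> 0 \<and> poly (g_at a0 as n q m b) \<xi> = 0 \<longrightarrow>
                 (\<Sum>z\<in>{z. poly (g_at a0 as n q m b + h_at hc b) z = 0 \<and> cmod (z - \<xi>) \<le> \<epsilon> * cmod \<xi>}.
                     order z (g_at a0 as n q m b + h_at hc b))
                 = order \<xi> (g_at a0 as n q m b))"
    proof (intro exI[of _ \<delta>] conjI allI impI)
      show "\<delta> > 0" unfolding \<delta>_def using assms(1) L0 H0 by simp
      fix b :: complex and \<xi> :: complex
      assume b: "0 < cmod b \<and> cmod b < \<delta>"
      assume xi: "\<xi> \<noteq> 0 \<and> poly (g_at a0 as n q m b) \<xi> = 0"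
      let ?g = "g_at a0 as n q m b" and ?h = "h_at hc b"
      have b0: "b \<noteq> 0" using b by auto
      have b1: "cmod b \<le> 1" using b unfolding \<delta>_def by simp
      have bd: "cmod b < cmod a0 * L^n / (H+1)" using b unfolding \<delta>_def by simp
      have roots: "\<exists>i\<in>I. b powi q * z = as i" if "poly ?g z = 0" for z
      proof -
        have "(\<Prod>i\<in>{1..n}. b powi q * z - as i) = 0"
          using that assms(1) b0 by (simp add: poly_g)
        then show ?thesis unfolding I_def by auto
      qed
      obtain k where k: "k \<in> I" "b powi q * \<xi> = as k" using roots xi by blast
      have ak0: "as k \<noteq> 0" using k xi b0 by auto
      define r where "r = \<epsilon> * cmod \<xi>"
      have r0: "r > 0" unfolding r_def using ep xi by simp
      have circ: "cmod (poly ?h z) < cmod (poly ?g z)" if z: "cmod (z - \<xi>) = r" for z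
      proof -
        define t where "t = b powi q * z"
        have tk: "cmod (t - as k) = \<epsilon> * cmod (as k)"
        proof -
          have "t - as k = b powi q * (z - \<xi>)" unfolding t_def k(2)[symmetric] by (simp add: algebra_simps)
          then have "cmod (t - as k) = cmod (b powi q) * (\<epsilon> * cmod \<xi>)" using z r_def by (simp add: norm_mult)
          also have "\<dots> = \<epsilon> * cmod (as k)" unfolding k(2)[symmetric] by (simp add: norm_mult)
          finally show ?thesis .
        qed
        have fac: "L \<le> cmod (t - as i)" if i: "i \<in> I" for i
        proof (cases "as i = as k")
          case True
          then show ?thesis using tk alle[OF k(1) ak0] ep unfolding L_def by simp
        next
          case False
          then have "(i,k) \<in> P" unfolding P_def using i k ak0 by auto
          from e0P[OF this] ep have "\<epsilon> \<le> cmod (as i - as k) / (2 * cmod (as k))" by linarith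
          then have "2 * (\<epsilon> * cmod (as k)) \<le> cmod (as i - as k)" using ak0 by (simp add: field_simps)
          moreover have "cmod (as i - as k) \<le> cmod (t - as i) + cmod (t - as k)"
            using norm_triangle_ineq4[of "t - as k" "t - as i"] by (simp add: norm_minus_commute)
          ultimately have "\<epsilon> * cmod (as k) \<le> cmod (t - as i)" using tk by linarith
          then show ?thesis using alle[OF k(1) ak0] ep unfolding L_def
            by (meson mult_left_mono order_trans less_imp_le)
        qed
        have "L^n = (\<Prod>i\<in>I. L)" unfolding I_def by simp
        also have "\<dots> \<le> (\<Prod>i\<in>I. cmod (t - as i))"
          using fac L0 by (intro prod_mono) auto
        finally have pl: "L^n \<le> (\<Prod>i\<in>I. cmod (t - as i))" .
        have gz: "cmod (poly ?g z) = cmod a0 * cmod b powi m * (\<Prod>i\<in>I. cmod (t - as i))"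
          unfolding poly_g t_def I_def by (simp add: norm_mult prod_norm[symmetric] norm_power_int)
        have bm: "cmod b powi m > 0" using b by simp
        have gl: "cmod a0 * cmod b powi m * L^n \<le> cmod (poly ?g z)"
          unfolding gz using pl bm by (intro mult_left_mono) auto
        have tb: "cmod t \<le> 2 * M"
        proof -
          have "cmod t \<le> cmod (as k) + cmod (t - as k)"
            using norm_triangle_ineq2[of t "as k"] by simp
          also have "\<dots> \<le> 2 * cmod (as k)"
          proof -
            have "\<epsilon> \<le> 1" using ep e0le1 by linarith
            then have "\<epsilon> * cmod (as k) \<le> 1 * cmod (as k)" by (intro mult_right_mono) auto
            then show ?thesis using tk by simp
          qed
          finally show ?thesis using Mge[OF k(1)] by simp
        qed
        have hb: "cmod (poly ?h z) \<le> H * (cmod b powi m * cmod b)"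
          unfolding H_def using h_bound[OF assms(3), of b z "2*M"] b b1 tb t_def by simp
        have "H * cmod b \<le> (H+1) * cmod b" using b by simp
        also have "\<dots> < cmod a0 * L^n" using bd H0 by (simp add: field_simps)
        finally have "H * cmod b < cmod a0 * L^n" .
        then have "H * cmod b * cmod b powi m < cmod a0 * L^n * cmod b powi m"
          using bm by simp
        then show ?thesis using hb gl by (simp add: algebra_simps)
      qed
      have g0: "?g \<noteq> 0"
      proof
        assume "?g = 0"
        moreover have "cmod ((\<xi> + of_real r) - \<xi>) = r" using r0 by simp
        ultimately show False using circ[of "\<xi> + of_real r"] by simp
      qed
      have RC: "(\<Sum>z\<in>{z. poly (?g + ?h) z = 0 \<and> cmod (z - \<xi>) \<le> r}. order z (?g + ?h))
          = (\<Sum>z\<in>{z. poly ?g z = 0 \<and> cmod (z - \<xi>) \<le> r}. order z ?g)"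
        by (rule rouche_count[OF r0 g0 circ])
      have S: "{z. poly ?g z = 0 \<and> cmod (z - \<xi>) \<le> r} = {\<xi>}"
      proof (intro equalityI subsetI)
        fix z assume "z \<in> {z. poly ?g z = 0 \<and> cmod (z - \<xi>) \<le> r}"
        then have z: "poly ?g z = 0" "cmod (z - \<xi>) \<le> r" by auto
        obtain i where i: "i \<in> I" "b powi q * z = as i" using roots[OF z(1)] by blast
        have "as i - as k = b powi q * (z - \<xi>)" using i k by (simp add: algebra_simps)
        then have "cmod (as i - as k) = cmod (b powi q) * cmod (z - \<xi>)" by (simp add: norm_mult)
        also have "\<dots> \<le> cmod (b powi q) * r" using z(2) by (simp add: mult_left_mono)
        also have "\<dots> = \<epsilon> * cmod (as k)" unfolding r_def k(2)[symmetric] by (simp add: norm_mult)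
        finally have ik: "cmod (as i - as k) \<le> \<epsilon> * cmod (as k)" .
        have "as i = as k"
        proof (rule ccontr)
          assume ne: "as i \<noteq> as k"
          then have "(i,k) \<in> P" unfolding P_def using i k ak0 by auto
          from e0P[OF this] ep have "\<epsilon> \<le> cmod (as i - as k) / (2 * cmod (as k))" by linarith
          then have "2 * (\<epsilon> * cmod (as k)) \<le> cmod (as i - as k)" using ak0 by (simp add: field_simps)
          moreover have "\<epsilon> * cmod (as k) > 0" using ep ak0 by simp
          ultimately have "cmod (as i - as k) \<le> 0" using ik by linarith
          then show False using ne by simp
        qed
        then have "b powi q * z = b powi q * \<xi>" using i k by simp
        then show "z \<in> {\<xi>}" using b0 by simp
      next
        fix z assume "z \<in> {\<xi>}"
        then show "z \<in> {z. poly ?g z = 0 \<and> cmod (z - \<xi>) \<le> r}" using xi r0 by simp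
      qed
      show "(\<Sum>z\<in>{z. poly (?g + ?h) z = 0 \<and> cmod (z - \<xi>) \<le> \<epsilon> * cmod \<xi>}. order z (?g + ?h))
                 = order \<xi> ?g"
        using RC S unfolding r_def by simp
    qed
  qed
qed

end
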